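(* Assume the standing setup below. Let $x\in X$ (so $x\ne y$) and let $s\le t$ be phase change numbers of $X$ with $s_1\le s$. Suppose that $[x]_{s,Y}=[x]_{t,Y}$ (i.e. $(s,[x]_{s,Y})\to(t,[x]_{t,Y})$ is a partial layer of $Y$) and that $y\in[x]_{s,Y}$. Then $[x]_{s,X}=[x]_{t,X}$, i.e. $(s,[x]_{s,X})\to(t,[x]_{t,X})$ is a partial layer of $X$.
   Context: For a finite set $Z\subset\mathbb{R}^n$ and a real number $s\ge 0$, the Vietoris–Rips complex $V_s(Z)$ is the simplicial complex with vertex set $Z$ whose simplices are the nonempty subsets $\sigma\subseteq Z$ with $d(z,z')\le s$ for all $z,z'\in\sigma$ ($d$ the Euclidean distance). For $z\in Z$, $[z]_{s,Z}\subseteq Z$ denotes the set of vertices of the path component of $V_s(Z)$ containing $z$. A partial layer for $Z$ is a pair of parameters $s\le t$ and $z\in Z$ (written as an edge $(s,[z]_{s,Z})\to(t,[z]_{t,Z})$) with $[z]_{s,Z}=[z]_{t,Z}$ as subsets of $Z$. Standing setup: $X\subset\mathbb{R}^n$ is a finite set with at least two points, $y\in\mathbb{R}^n\setminus X$, $Y=X\sqcup\{y\}$. The phase change numbers of $X$ are the distinct values $0=s_0<s_1<\dots<s_k$ of $d(x,x')$ for $x,x'\in X$. There are $x_0\in X$ and a real $r>0$ with $d(y,x_0)<r$ and $r<s_{i+1}-s_i$ for all $0\le i<k$. *)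

theory Defs
  imports "HOL-Analysis.Analysis"
begin

definition VR :: "real \<Rightarrow> 'a::euclidean_space set \<Rightarrow> 'a set set" where
  "VR s Z = {\<sigma>. \<sigma> \<noteq> {} \<and> \<sigma> \<subseteq> Z \<and> (\<forall>z\<in>\<sigma>. \<forall>z'\<in>\<sigma>. dist z z' \<le> s)}"

text \<open>Vertices of the path component of V_s(Z) containing z: vertices reachable
  from z by an edge path, i.e. a chain of 1-simplices of V_s(Z).\<close>
definition vr_component :: "real \<Rightarrow> 'a::euclidean_space set \<Rightarrow> 'a \<Rightarrow> 'a set" where
  "vr_component s Z z = {w. (z, w) \<in> ({(u, v). {u, v} \<in> VR s Z})\<^sup>*}"

definition phase_numbers :: "'a::euclidean_space set \<Rightarrow> real set" where
  "phase_numbers X = {dist x x' | x x'. x \<in> X \<and> x' \<in> X}"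

definition s1 :: "'a::euclidean_space set \<Rightarrow> real" where
  "s1 X = Min (phase_numbers X - {0})"

end

theory Submission
  imports Defs
begin

lemma VR_edge: "{u,v} \<in> VR s Z \<longleftrightarrow> u \<in> Z \<and> v \<in> Z \<and> dist u v \<le> s \<and> 0 \<le> s"
  unfolding VR_def by (auto simp: dist_commute)

lemma rtrancl_map:
  assumes "(a,b) \<in> R\<^sup>*" and "\<And>u v. (u,v)\<in>R \<Longrightarrow> (f u, f v) \<in> S"
  shows "(f a, f b) \<in> S\<^sup>*"
  using assms(1)
proof (induction rule: rtrancl_induct)
  case base then show ?case by simp
next
  case (step v w) then show ?case using assms(2) by (meson rtrancl.rtrancl_into_rtrancl)
qed

theorem corollary14:
  fixes X :: "'a::euclidean_space set" and y x x0 :: 'a and r s t :: real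
  assumes "finite X" and "card X \<ge> 2"
    and "y \<notin> X"
    and "x0 \<in> X" and "r > 0" and "dist y x0 < r"
    and "\<forall>a\<in>phase_numbers X. \<forall>b\<in>phase_numbers X. a < b \<longrightarrow> r < b - a"
    and "x \<in> X"
    and "s \<in> phase_numbers X" and "t \<in> phase_numbers X" and "s \<le> t"
    and "s1 X \<le> s"
    and "vr_component s (insert y X) x = vr_component t (insert y X) x"
    and "y \<in> vr_component s (insert y X) x"
  shows "vr_component s X x = vr_component t X x"
proof
  have s0: "0 \<le> s" using assms(9) unfolding phase_numbers_def by auto
  show "vr_component s X x \<subseteq> vr_component t X x"
  proof
    fix w assume "w \<in> vr_component s X x"
    hence "(x,w) \<in> ({(u, v). {u, v} \<in> VR s X})\<^sup>*" unfolding vr_component_def by auto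
    hence "(id x, id w) \<in> ({(u, v). {u, v} \<in> VR t X})\<^sup>*"
      by (rule rtrancl_map) (use assms(11) in \<open>auto simp: VR_edge\<close>)
    thus "w \<in> vr_component t X x" unfolding vr_component_def by simp
  qed
  show "vr_component t X x \<subseteq> vr_component s X x"
  proof
    fix w assume "w \<in> vr_component t X x"
    hence wt: "(x,w) \<in> ({(u, v). {u, v} \<in> VR t X})\<^sup>*" unfolding vr_component_def by auto
    have wX: "w \<in> X" using wt assms(8) by (cases rule: rtranclE) (auto simp: VR_edge)
    have "(id x, id w) \<in> ({(u, v). {u, v} \<in> VR t (insert y X)})\<^sup>*"
      by (rule rtrancl_map[OF wt]) (auto simp: VR_edge)
    hence "w \<in> vr_component s (insert y X) x" using assms(13) unfolding vr_component_def by simp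
    hence ws: "(x,w) \<in> ({(u, v). {u, v} \<in> VR s (insert y X)})\<^sup>*" unfolding vr_component_def by auto
    define f where "f = (\<lambda>u. if u = y then x0 else u)"
    have near: "dist v x0 \<le> s" if "v \<in> X" "dist v y \<le> s" for v
    proof (rule ccontr)
      assume "\<not> ?thesis"
      moreover have "dist v x0 \<in> phase_numbers X" using that assms(4) unfolding phase_numbers_def by auto
      ultimately have "r < dist v x0 - s" using assms(7,9) by auto
      moreover have "dist v x0 \<le> dist v y + dist y x0" by (rule dist_triangle)
      ultimately show False using that assms(6) by linarith
    qed
    have "(f x, f w) \<in> ({(u, v). {u, v} \<in> VR s X})\<^sup>*"
    proof (rule rtrancl_map[OF ws])
      fix u v assume "(u,v) \<in> {(u, v). {u, v} \<in> VR s (insert y X)}"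
      hence e: "u \<in> insert y X" "v \<in> insert y X" "dist u v \<le> s" by (auto simp: VR_edge)
      show "(f u, f v) \<in> {(u, v). {u, v} \<in> VR s X}"
        using e s0 near[of u] near[of v] assms(4)
        by (auto simp: VR_edge f_def dist_commute)
    qed
    moreover have "f x = x" "f w = w" using assms(3,8) wX by (auto simp: f_def)
    ultimately show "w \<in> vr_component s X x" unfolding vr_component_def by simp
  qed
qed

end
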